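(* Let $n\ge3$. The permutation representation $\rho_3^{\mathbb{C}}$ of $S_n$ unites conjugacy classes if and only if $n$ is even. (For even $n$, $\sigma=(1,2)(3,4)\cdots(n-1,n)$ and $\tau=(1)(2)(3,4)\cdots(n-1,n)$ are non-conjugate with $\rho_3^{\mathbb{C}}(\sigma)$ similar to $\rho_3^{\mathbb{C}}(\tau)$.)
   Context: For $1\le k\le n$, $\rho_k^{\mathbb{F}}$ denotes the permutation representation over the field $\mathbb{F}$ of $S_n$ arising from its action on ordered $k$-tuples $(i_1,\dots,i_k)$ of distinct elements of $\{1,\dots,n\}$, given by $\pi\cdot(i_1,\dots,i_k)=(\pi(i_1),\dots,\pi(i_k))$. A representation $T$ of $G$ unites conjugacy classes if there are non-conjugate $\sigma,\tau\in G$ with $T(\sigma),T(\tau)$ similar matrices. *)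

theory Defs
  imports Complex_Main "HOL-Combinatorics.Permutations"
begin

definition tuples :: "nat \<Rightarrow> nat \<Rightarrow> nat list set" where
  "tuples k n = {xs. length xs = k \<and> distinct xs \<and> set xs \<subseteq> {1..n}}"

text \<open>Permutation matrix of p for the action p.(i1,...,ik) = (p i1, ..., p ik),
  rows/columns indexed by tuples: entry (x,y) is 1 iff p.y = x.\<close>
definition perm_rep :: "(nat \<Rightarrow> nat) \<Rightarrow> nat list \<Rightarrow> nat list \<Rightarrow> 'a::field" where
  "perm_rep p x y = (if map p y = x then 1 else 0)"

definition similar_on :: "'i set \<Rightarrow> ('i \<Rightarrow> 'i \<Rightarrow> 'a::field) \<Rightarrow> ('i \<Rightarrow> 'i \<Rightarrow> 'a) \<Rightarrow> bool" where
  "similar_on X A B \<longleftrightarrow> (\<exists>P Q.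
      (\<forall>x\<in>X. \<forall>y\<in>X. (\<Sum>z\<in>X. P x z * Q z y) = (if x = y then 1 else 0)) \<and>
      (\<forall>x\<in>X. \<forall>y\<in>X. (\<Sum>z\<in>X. Q x z * P z y) = (if x = y then 1 else 0)) \<and>
      (\<forall>x\<in>X. \<forall>y\<in>X. (\<Sum>z\<in>X. P x z * A z y) = (\<Sum>z\<in>X. B x z * P z y)))"

definition conj_Sn :: "nat \<Rightarrow> (nat \<Rightarrow> nat) \<Rightarrow> (nat \<Rightarrow> nat) \<Rightarrow> bool" where
  "conj_Sn n s t \<longleftrightarrow> (\<exists>g. g permutes {1..n} \<and> t = g \<circ> s \<circ> inv g)"

definition unites_conj :: "nat \<Rightarrow> 'i set \<Rightarrow> ((nat \<Rightarrow> nat) \<Rightarrow> 'i \<Rightarrow> 'i \<Rightarrow> 'a::field) \<Rightarrow> bool" where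
  "unites_conj n X T \<longleftrightarrow> (\<exists>s t. s permutes {1..n} \<and> t permutes {1..n} \<and>
      \<not> conj_Sn n s t \<and> similar_on X (T s) (T t))"

end

theory Submission
  imports Defs
begin


definition good :: "('a \<Rightarrow> 'a) \<Rightarrow> 'a set \<Rightarrow> bool" where
  "good f S \<longleftrightarrow> finite S \<and> inj_on f S \<and> f ` S = S"

lemma good_funpow_image: "good f S \<Longrightarrow> (f ^^ k) ` S = S"
proof (induction k)
  case (Suc k)
  have "(f ^^ Suc k) ` S = f ` ((f ^^ k) ` S)" by (simp add: image_image)
  then show ?case using Suc by (simp add: good_def)
qed simp

lemma good_funpow_in: "good f S \<Longrightarrow> x \<in> S \<Longrightarrow> (f ^^ k) x \<in> S"
  using good_funpow_image by blast

lemma good_funpow_inj: "good f S \<Longrightarrow> inj_on (f ^^ k) S"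
proof (induction k)
  case 0 then show ?case by simp
next
  case (Suc k)
  have "inj_on (f \<circ> (f ^^ k)) S"
    using Suc good_funpow_image[OF Suc.prems, of k] by (intro comp_inj_on) (auto simp: good_def)
  then show ?case by (simp add: comp_def)
qed

lemma period_exists:
  assumes g: "good f S" and x: "x \<in> S"
  shows "\<exists>k>0. (f ^^ k) x = x"
proof -
  have fin: "finite S" using g by (simp add: good_def)
  have sub: "(\<lambda>i. (f ^^ i) x) ` {0..card S} \<subseteq> S" using good_funpow_in[OF g x] by auto
  have "\<not> inj_on (\<lambda>i. (f ^^ i) x) {0..card S}"
  proof
    assume "inj_on (\<lambda>i. (f ^^ i) x) {0..card S}"
    then have "card ((\<lambda>i. (f ^^ i) x) ` {0..card S}) = card S + 1" by (simp add: card_image)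
    moreover have "card ((\<lambda>i. (f ^^ i) x) ` {0..card S}) \<le> card S" using card_mono[OF fin sub] .
    ultimately show False by simp
  qed
  then obtain i j where ij: "i \<noteq> j" "(f ^^ i) x = (f ^^ j) x" unfolding inj_on_def by blast
  have main: "\<exists>k>0. (f ^^ k) x = x" if "i < j" "(f ^^ i) x = (f ^^ j) x" for i j
  proof -
    have "(f ^^ j) x = (f ^^ i) ((f ^^ (j - i)) x)"
      using that by (metis add_diff_inverse_nat funpow_add not_less_iff_gr_or_eq o_apply)
    with that have "(f ^^ i) ((f ^^ (j - i)) x) = (f ^^ i) x" by simp
    then have "(f ^^ (j - i)) x = x"
      using good_funpow_inj[OF g, of i] good_funpow_in[OF g x] x unfolding inj_on_def by blast
    then show ?thesis using that by (intro exI[of _ "j - i"]) auto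
  qed
  show ?thesis using ij main[of i j] main[of j i] by (cases "i < j") auto
qed

definition per :: "('a \<Rightarrow> 'a) \<Rightarrow> 'a \<Rightarrow> nat" where
  "per f x = (LEAST k. 0 < k \<and> (f ^^ k) x = x)"

lemma per_props:
  assumes "good f S" "x \<in> S"
  shows "0 < per f x" "(f ^^ per f x) x = x" "\<And>m. 0 < m \<Longrightarrow> m < per f x \<Longrightarrow> (f ^^ m) x \<noteq> x"
proof -
  from period_exists[OF assms] have ex: "\<exists>k. 0 < k \<and> (f ^^ k) x = x" by blast
  show "0 < per f x" "(f ^^ per f x) x = x"
    using LeastI_ex[OF ex] unfolding per_def by auto
  show "\<And>m. 0 < m \<Longrightarrow> m < per f x \<Longrightarrow> (f ^^ m) x \<noteq> x"
    unfolding per_def using not_less_Least by blast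
qed

lemma per_dvd:
  assumes "good f S" "x \<in> S"
  shows "(f ^^ m) x = x \<longleftrightarrow> per f x dvd m"
proof
  assume h: "(f ^^ m) x = x"
  have "(f ^^ (m mod per f x)) x = x" using funpow_mod_eq[OF per_props(2)[OF assms]] h by simp
  moreover have "m mod per f x < per f x" using per_props(1)[OF assms] by simp
  ultimately have "m mod per f x = 0" using per_props(3)[OF assms] by blast
  then show "per f x dvd m" by auto
next
  assume "per f x dvd m"
  then have "m mod per f x = 0" by simp
  then show "(f ^^ m) x = x" using funpow_mod_eq[OF per_props(2)[OF assms], of m] by simp
qed

lemma per_inj:
  assumes "good f S" "x \<in> S"
  shows "inj_on (\<lambda>i. (f ^^ i) x) {..<per f x}"
  using inj_on_funpow_least[where f=f and n="per f x" and s=x] per_props[OF assms] by (simp add: lessThan_atLeast0)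

lemma per_le: assumes "good f S" "x \<in> S" shows "per f x \<le> card S"
proof -
  have "card ((\<lambda>i. (f ^^ i) x) ` {..<per f x}) = per f x"
    using card_image[OF per_inj[OF assms]] by simp
  moreover have "(\<lambda>i. (f ^^ i) x) ` {..<per f x} \<subseteq> S" using good_funpow_in[OF assms] by auto
  ultimately show ?thesis using card_mono assms(1) unfolding good_def by metis
qed

lemma funpow_eq_iff:
  assumes "good f S" "x \<in> S"
  shows "(f ^^ i) x = (f ^^ j) x \<longleftrightarrow> i mod per f x = j mod per f x"
proof
  assume "(f ^^ i) x = (f ^^ j) x"
  then have "(f ^^ (i mod per f x)) x = (f ^^ (j mod per f x)) x"
    using funpow_mod_eq[OF per_props(2)[OF assms]] by metis
  then show "i mod per f x = j mod per f x"
    using per_inj[OF assms] per_props(1)[OF assms] unfolding inj_on_def by simp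
next
  assume "i mod per f x = j mod per f x"
  then show "(f ^^ i) x = (f ^^ j) x" using funpow_mod_eq[OF per_props(2)[OF assms]] by metis
qed

lemma funpow_comm: "(f ^^ m) ((f ^^ i) x) = (f ^^ i) ((f ^^ m) x)"
  by (metis add.commute funpow_add o_apply)

lemma per_funpow:
  assumes g: "good f S" and x: "x \<in> S"
  shows "per f ((f ^^ i) x) = per f x"
proof -
  have "\<And>m. ((f ^^ m) ((f ^^ i) x) = (f ^^ i) x) = ((f ^^ m) x = x)"
    using good_funpow_inj[OF g, of i] good_funpow_in[OF g x] x funpow_comm[where f=f]
    unfolding inj_on_def by metis
  then show ?thesis unfolding per_def by simp
qed

definition orb :: "('a \<Rightarrow> 'a) \<Rightarrow> 'a \<Rightarrow> 'a set" where
  "orb f x = (\<lambda>i. (f ^^ i) x) ` {..<per f x}"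

lemma orb_range:
  assumes "good f S" "x \<in> S"
  shows "orb f x = range (\<lambda>i. (f ^^ i) x)"
proof -
  have "(f ^^ i) x \<in> orb f x" for i
    unfolding orb_def using funpow_mod_eq[OF per_props(2)[OF assms], of i] per_props(1)[OF assms]
    by (metis image_eqI lessThan_iff mod_less_divisor)
  then show ?thesis unfolding orb_def by auto
qed

lemma card_orb: assumes "good f S" "x \<in> S" shows "card (orb f x) = per f x"
  unfolding orb_def using card_image[OF per_inj[OF assms]] by simp

lemma orb_sub: assumes "good f S" "x \<in> S" shows "orb f x \<subseteq> S"
  unfolding orb_def using good_funpow_in[OF assms] by auto

lemma x_in_orb: assumes "good f S" "x \<in> S" shows "x \<in> orb f x"
  using orb_range[OF assms] by (metis funpow_0 rangeI)

lemma orb_per: assumes "good f S" "x \<in> S" "y \<in> orb f x" shows "per f y = per f x"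
  using assms orb_range per_funpow by fastforce

lemma orb_in_S: assumes "good f S" "x \<in> S" "y \<in> orb f x" shows "y \<in> S"
  using orb_sub[OF assms(1,2)] assms(3) by blast

lemma orb_fix: assumes "good f S" "x \<in> S" "y \<in> orb f x"
  shows "(f ^^ m) y = y \<longleftrightarrow> per f x dvd m"
  using per_dvd[OF assms(1) orb_in_S[OF assms]] orb_per[OF assms] by simp

lemma f_orb: assumes "good f S" "x \<in> S" shows "f ` orb f x = orb f x"
proof -
  have "f ` orb f x \<subseteq> orb f x"
  proof
    fix y assume "y \<in> f ` orb f x"
    then obtain i where "y = f ((f ^^ i) x)" using orb_range[OF assms] by auto
    then have "y = (f ^^ Suc i) x" by simp
    then show "y \<in> orb f x" using orb_range[OF assms] by (metis rangeI)
  qed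
  moreover have "inj_on f (orb f x)"
    using assms orb_sub[OF assms] unfolding good_def by (meson inj_on_subset)
  ultimately show ?thesis
    using endo_inj_surj[of "orb f x" f] unfolding orb_def by auto
qed

lemma good_diff: assumes "good f S" "x \<in> S" shows "good f (S - orb f x)"
proof -
  have i: "inj_on f S" and fs: "f ` S = S" and fin: "finite S" using assms(1) by (auto simp: good_def)
  have "f ` (S - orb f x) = f ` S - f ` orb f x"
    using inj_on_image_set_diff[OF i, of S "orb f x"] orb_sub[OF assms] by simp
  then show ?thesis using fs f_orb[OF assms] fin i unfolding good_def
    by (simp add: inj_on_diff)
qed



lemma card_split_sub:
  assumes "finite S" "R \<subseteq> S"
  shows "card {z\<in>S. P z} = card {z\<in>S - R. P z} + card {z\<in>R. P z}"
proof -
  have "{z\<in>S. P z} = {z\<in>S - R. P z} \<union> {z\<in>R. P z}" using assms by auto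
  moreover have "finite {z\<in>S - R. P z}" "finite {z\<in>R. P z}" using assms by (auto intro: finite_subset)
  moreover have "{z\<in>S - R. P z} \<inter> {z\<in>R. P z} = {}" by auto
  ultimately show ?thesis by (simp add: card_Un_disjoint)
qed

lemma fixcount_split:
  assumes g: "good f S" and x: "x \<in> S"
  shows "card {z\<in>S. (f ^^ m) z = z} = card {z\<in>S - orb f x. (f ^^ m) z = z} + (if per f x dvd m then per f x else 0)"
proof -
  have fin: "finite S" using g by (simp add: good_def)
  have "{z\<in>orb f x. (f ^^ m) z = z} = (if per f x dvd m then orb f x else {})"
    using orb_fix[OF g x] by auto
  then have c1: "card {z\<in>orb f x. (f ^^ m) z = z} = (if per f x dvd m then per f x else 0)"
    using card_orb[OF g x] by simp
  have c2: "card {z\<in>S. (f ^^ m) z = z} = card {z\<in>S - orb f x. (f ^^ m) z = z} + card {z\<in>orb f x. (f ^^ m) z = z}"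
    by (rule card_split_sub[OF fin orb_sub[OF g x]])
  show ?thesis unfolding c2 c1 ..
qed

lemma perclass_split:
  assumes g: "good f S" and x: "x \<in> S"
  shows "card {z\<in>S. per f z \<in> D} = card {z\<in>S - orb f x. per f z \<in> D} + (if per f x \<in> D then per f x else 0)"
proof -
  have fin: "finite S" using g by (simp add: good_def)
  have "{z\<in>orb f x. per f z \<in> D} = (if per f x \<in> D then orb f x else {})"
    using orb_per[OF g x] by auto
  then have c1: "card {z\<in>orb f x. per f z \<in> D} = (if per f x \<in> D then per f x else 0)"
    using card_orb[OF g x] by simp
  have c2: "card {z\<in>S. per f z \<in> D} = card {z\<in>S - orb f x. per f z \<in> D} + card {z\<in>orb f x. per f z \<in> D}"
    by (rule card_split_sub[OF fin orb_sub[OF g x]])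
  show ?thesis unfolding c2 c1 ..
qed

lemma card_diff_orb_less:
  assumes g: "good f S" and x: "x \<in> S"
  shows "card (S - orb f x) < card S"
proof -
  have fin: "finite S" using g by (simp add: good_def)
  have sub: "orb f x \<subseteq> S" by (rule orb_sub[OF g x])
  have fo: "finite (orb f x)" using fin sub by (rule finite_subset[rotated])
  have "card (S - orb f x) = card S - card (orb f x)" using card_Diff_subset[OF fo sub] .
  moreover have "card (orb f x) > 0" using card_orb[OF g x] per_props(1)[OF g x] by simp
  moreover have "card (orb f x) \<le> card S" using card_mono[OF fin sub] .
  ultimately show ?thesis by linarith
qed

lemma perclass_dvd:
  assumes "good f S" "\<forall>d\<in>D. k dvd d"
  shows "k dvd card {z\<in>S. per f z \<in> D}"
  using assms
proof (induction "card S" arbitrary: S rule: less_induct)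
  case less
  show ?case
  proof (cases "S = {}")
    case True then show ?thesis by simp
  next
    case False
    then obtain x where x: "x \<in> S" by blast
    have "card (S - orb f x) < card S" by (rule card_diff_orb_less[OF less.prems(1) x])
    then have "k dvd card {z\<in>S - orb f x. per f z \<in> D}"
      using less.hyps good_diff[OF less.prems(1) x] less.prems(2) by blast
    then show ?thesis using perclass_split[OF less.prems(1) x, of D] less.prems(2) by auto
  qed
qed

lemma iso:
  assumes "good f S" "good g T" "\<forall>m>0. card {x\<in>S. (f ^^ m) x = x} = card {y\<in>T. (g ^^ m) y = y}"
  shows "\<exists>h. bij_betw h S T \<and> (\<forall>x\<in>S. h (f x) = g (h x))"
  using assms
proof (induction "card S" arbitrary: S T rule: less_induct)
  case less
  note gS = less.prems(1) and gT = less.prems(2) and cnt = less.prems(3)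
  have finS: "finite S" and finT: "finite T" using gS gT by (auto simp: good_def)
  show ?case
  proof (cases "S = {}")
    case True
    have "T = {}"
    proof (rule ccontr)
      assume "T \<noteq> {}"
      then obtain y where y: "y \<in> T" by blast
      have "y \<in> {z\<in>T. (g ^^ per g y) z = z}" using per_props(2)[OF gT y] y by simp
      then have "card {z\<in>T. (g ^^ per g y) z = z} > 0" using finT by (metis (no_types, lifting) card_gt_0_iff empty_iff finite_subset mem_Collect_eq subsetI)
      then show False using cnt per_props(1)[OF gT y] True by auto
    qed
    then have "bij_betw (\<lambda>_. undefined) S T" using True by (simp add: bij_betw_def)
    then show ?thesis using True by blast
  next
    case False
    define d where "d = Min (per f ` S)"
    have "d \<in> per f ` S" unfolding d_def using False finS by simp
    then obtain x where x: "x \<in> S" and dx: "per f x = d" by auto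
    have dmin: "d \<le> per f z" if "z \<in> S" for z unfolding d_def using finS that by simp
    have d0: "0 < d" using per_props(1)[OF gS x] dx by simp
    have small: "card {z\<in>S. (f ^^ e) z = z} = 0" if "0 < e" "e < d" for e
    proof -
      have "{z\<in>S. (f ^^ e) z = z} = {}"
      proof (rule ccontr)
        assume "{z\<in>S. (f ^^ e) z = z} \<noteq> {}"
        then obtain z where z: "z \<in> S" "(f ^^ e) z = z" by blast
        then have "per f z dvd e" using per_dvd[OF gS z(1)] by simp
        then have "per f z \<le> e" using that by (simp add: dvd_imp_le)
        then show False using dmin[OF z(1)] that by simp
      qed
      then show ?thesis by (simp only: card.empty)
    qed
    have "x \<in> {z\<in>S. (f ^^ d) z = z}" using x per_props(2)[OF gS x] dx by simp
    then have "card {z\<in>S. (f ^^ d) z = z} > 0" using finS by (metis (no_types, lifting) card_gt_0_iff empty_iff finite_subset mem_Collect_eq subsetI)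
    then have "card {z\<in>T. (g ^^ d) z = z} > 0" using cnt d0 by simp
    then have "{z\<in>T. (g ^^ d) z = z} \<noteq> {}" by (metis card.empty less_irrefl)
    then obtain y where y: "y \<in> T" "(g ^^ d) y = y" by blast
    have dy: "per g y = d"
    proof (rule ccontr)
      assume ne: "per g y \<noteq> d"
      have "per g y dvd d" using per_dvd[OF gT y(1)] y(2) by simp
      then have lt: "per g y < d" using ne d0 by (simp add: dvd_imp_le le_neq_implies_less)
      have "y \<in> {z\<in>T. (g ^^ per g y) z = z}" using per_props(2)[OF gT y(1)] y by simp
      then have "card {z\<in>T. (g ^^ per g y) z = z} > 0" using finT by (metis (no_types, lifting) card_gt_0_iff empty_iff finite_subset mem_Collect_eq subsetI)
      then show False using cnt small[OF per_props(1)[OF gT y(1)] lt] per_props(1)[OF gT y(1)] by simp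
    qed
    define S' where "S' = S - orb f x"
    define T' where "T' = T - orb g y"
    have gS': "good f S'" unfolding S'_def using good_diff[OF gS x] .
    have gT': "good g T'" unfolding T'_def using good_diff[OF gT y(1)] .
    have lt: "card S' < card S" unfolding S'_def by (rule card_diff_orb_less[OF gS x])
    have cnt': "\<forall>m>0. card {z\<in>S'. (f ^^ m) z = z} = card {z\<in>T'. (g ^^ m) z = z}"
    proof (intro allI impI)
      fix m :: nat assume m: "m > 0"
      note a = fixcount_split[OF gS x, of m, unfolded dx, folded S'_def]
      note b = fixcount_split[OF gT y(1), of m, unfolded dy, folded T'_def]
      show "card {z\<in>S'. (f ^^ m) z = z} = card {z\<in>T'. (g ^^ m) z = z}"
        using a b cnt[rule_format, OF m] by linarith
    qed
    obtain h' where h': "bij_betw h' S' T'" "\<forall>z\<in>S'. h' (f z) = g (h' z)"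
      using less.hyps[OF lt gS' gT' cnt'] by blast
    define h0 where "h0 z = (g ^^ (SOME i. (f ^^ i) x = z)) y" for z
    have h0_eq: "h0 ((f ^^ j) x) = (g ^^ j) y" for j
    proof -
      have "(f ^^ (SOME i. (f ^^ i) x = (f ^^ j) x)) x = (f ^^ j) x" by (rule someI) simp
      then have "(SOME i. (f ^^ i) x = (f ^^ j) x) mod d = j mod d"
        using funpow_eq_iff[OF gS x] dx by simp
      then show ?thesis unfolding h0_def using funpow_eq_iff[OF gT y(1)] dy by simp
    qed
    have oS: "orb f x = (\<lambda>i. (f ^^ i) x) ` {..<d}" unfolding orb_def dx ..
    have oT: "orb g y = (\<lambda>i. (g ^^ i) y) ` {..<d}" unfolding orb_def dy ..
    have b0: "bij_betw h0 (orb f x) (orb g y)"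
    proof (rule bij_betw_imageI)
      show "inj_on h0 (orb f x)"
      proof
        fix a b assume "a \<in> orb f x" "b \<in> orb f x" "h0 a = h0 b"
        then obtain i j where "a = (f ^^ i) x" "b = (f ^^ j) x" "(g ^^ i) y = (g ^^ j) y"
          using oS h0_eq by auto
        then show "a = b" using funpow_eq_iff[OF gS x] funpow_eq_iff[OF gT y(1)] dx dy by simp
      qed
      show "h0 ` orb f x = orb g y" unfolding oS oT image_image h0_eq ..
    qed
    define h where "h z = (if z \<in> orb f x then h0 z else h' z)" for z
    have "bij_betw h (orb f x) (orb g y)" using b0 by (rule bij_betw_cong[THEN iffD1, rotated]) (simp add: h_def)
    moreover have "bij_betw h S' T'" using h'(1) by (rule bij_betw_cong[THEN iffD1, rotated]) (simp add: h_def S'_def)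
    ultimately have "bij_betw h (orb f x \<union> S') (orb g y \<union> T')" by (rule bij_betw_combine) (auto simp: T'_def)
    moreover have "orb f x \<union> S' = S" "orb g y \<union> T' = T"
      using orb_sub[OF gS x] orb_sub[OF gT y(1)] by (auto simp: S'_def T'_def)
    ultimately have bh: "bij_betw h S T" by simp
    have eqv: "h (f z) = g (h z)" if z: "z \<in> S" for z
    proof (cases "z \<in> orb f x")
      case True
      then obtain j where j: "z = (f ^^ j) x" using oS by auto
      have "f z = (f ^^ Suc j) x" using j by simp
      moreover have "f z \<in> orb f x" using f_orb[OF gS x] True by blast
      ultimately have "h (f z) = (g ^^ Suc j) y" using h0_eq[of "Suc j"] unfolding h_def by (simp del: funpow.simps)
      then show ?thesis using True j h0_eq unfolding h_def by simp
    next
      case False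
      then have zS': "z \<in> S'" using z by (simp add: S'_def)
      then have "f z \<in> S'" using gS' unfolding good_def by blast
      then have "f z \<notin> orb f x" by (simp add: S'_def)
      then show ?thesis using False h'(2) zS' unfolding h_def by simp
    qed
    show ?thesis using bh eqv by blast
  qed
qed



definition mm :: "'i set \<Rightarrow> ('i \<Rightarrow> 'i \<Rightarrow> 'a::field) \<Rightarrow> ('i \<Rightarrow> 'i \<Rightarrow> 'a) \<Rightarrow> 'i \<Rightarrow> 'i \<Rightarrow> 'a" where
  "mm X A B x y = (\<Sum>z\<in>X. A x z * B z y)"

definition tr :: "'i set \<Rightarrow> ('i \<Rightarrow> 'i \<Rightarrow> 'a::field) \<Rightarrow> 'a" where
  "tr X A = (\<Sum>x\<in>X. A x x)"

definition idm :: "'i \<Rightarrow> 'i \<Rightarrow> 'a::field" where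
  "idm x y = (if x = y then 1 else 0)"

lemma mm_assoc: "finite X \<Longrightarrow> mm X (mm X A B) C x y = mm X A (mm X B C) x y"
  unfolding mm_def sum_distrib_left sum_distrib_right
  by (subst sum.swap) (simp add: mult.assoc)

lemma if01_mult: "(if P then 1 else 0) * (a::'a::field) = (if P then a else 0)"
  "a * (if P then 1 else 0) = (if P then a else 0)" by simp_all

lemma mm_idL: "x \<in> X \<Longrightarrow> finite X \<Longrightarrow> mm X idm A x y = A x y"
  unfolding mm_def idm_def if01_mult by (simp add: sum.delta)

lemma mm_idR: "y \<in> X \<Longrightarrow> finite X \<Longrightarrow> mm X A idm x y = A x y"
  unfolding mm_def idm_def if01_mult by (simp add: sum.delta')

lemma mm_congL: "(\<And>z. z \<in> X \<Longrightarrow> A x z = A' x z) \<Longrightarrow> mm X A B x y = mm X A' B x y"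
  unfolding mm_def by (rule sum.cong) auto

lemma mm_congR: "(\<And>z. z \<in> X \<Longrightarrow> B z y = B' z y) \<Longrightarrow> mm X A B x y = mm X A B' x y"
  unfolding mm_def by (rule sum.cong) auto

lemma tr_comm: "tr X (mm X A B) = tr X (mm X B A)"
  unfolding tr_def mm_def by (subst sum.swap) (simp add: mult.commute)

lemma tr_cong: "(\<And>x. x \<in> X \<Longrightarrow> A x x = B x x) \<Longrightarrow> tr X A = tr X B"
  unfolding tr_def by (rule sum.cong) auto

lemma sim_pow_trace:
  assumes fin: "finite X" and sim: "similar_on X (Af 1) (Bf 1)"
    and Ap: "\<And>m x y. x\<in>X \<Longrightarrow> y\<in>X \<Longrightarrow> mm X (Af 1) (Af m) x y = Af (Suc m) x y"
    and Bp: "\<And>m x y. x\<in>X \<Longrightarrow> y\<in>X \<Longrightarrow> mm X (Bf 1) (Bf m) x y = Bf (Suc m) x y"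
    and A0: "\<And>x y. x\<in>X \<Longrightarrow> y\<in>X \<Longrightarrow> Af 0 x y = idm x y"
    and B0: "\<And>x y. x\<in>X \<Longrightarrow> y\<in>X \<Longrightarrow> Bf 0 x y = idm x y"
  shows "tr X (Af m) = tr X (Bf m)"
proof -
  obtain P Q where PQ: "\<forall>x\<in>X. \<forall>y\<in>X. mm X P Q x y = idm x y"
    and QP: "\<forall>x\<in>X. \<forall>y\<in>X. mm X Q P x y = idm x y"
    and PA: "\<forall>x\<in>X. \<forall>y\<in>X. mm X P (Af 1) x y = mm X (Bf 1) P x y"
    using sim unfolding similar_on_def mm_def idm_def by blast
  have com: "\<forall>x\<in>X. \<forall>y\<in>X. mm X P (Af k) x y = mm X (Bf k) P x y" for k
  proof (induction k)
    case 0
    show ?case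
    proof (intro ballI)
      fix x y assume xy: "x \<in> X" "y \<in> X"
      have "mm X P (Af 0) x y = mm X P idm x y" using A0 xy by (intro mm_congR) auto
      also have "\<dots> = P x y" using xy fin by (simp add: mm_idR)
      also have "\<dots> = mm X idm P x y" using xy fin by (simp add: mm_idL)
      also have "\<dots> = mm X (Bf 0) P x y" using B0 xy by (intro mm_congL) auto
      finally show "mm X P (Af 0) x y = mm X (Bf 0) P x y" .
    qed
  next
    case (Suc k)
    show ?case
    proof (intro ballI)
      fix x y assume xy: "x \<in> X" "y \<in> X"
      have "mm X P (Af (Suc k)) x y = mm X P (mm X (Af 1) (Af k)) x y"
        using Ap xy by (intro mm_congR) auto
      also have "\<dots> = mm X (mm X P (Af 1)) (Af k) x y" by (rule mm_assoc[OF fin, symmetric])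
      also have "\<dots> = mm X (mm X (Bf 1) P) (Af k) x y" using PA xy by (intro mm_congL) auto
      also have "\<dots> = mm X (Bf 1) (mm X P (Af k)) x y" by (rule mm_assoc[OF fin])
      also have "\<dots> = mm X (Bf 1) (mm X (Bf k) P) x y" using Suc xy by (intro mm_congR) auto
      also have "\<dots> = mm X (mm X (Bf 1) (Bf k)) P x y" by (rule mm_assoc[OF fin, symmetric])
      also have "\<dots> = mm X (Bf (Suc k)) P x y" using Bp xy by (intro mm_congL) auto
      finally show "mm X P (Af (Suc k)) x y = mm X (Bf (Suc k)) P x y" .
    qed
  qed
  have "tr X (Af m) = tr X (mm X (mm X Q P) (Af m))"
  proof (rule tr_cong)
    fix x assume x: "x \<in> X"
    have "mm X (mm X Q P) (Af m) x x = mm X idm (Af m) x x" using QP x by (intro mm_congL) auto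
    then show "Af m x x = mm X (mm X Q P) (Af m) x x" using x fin by (simp add: mm_idL)
  qed
  also have "\<dots> = tr X (mm X Q (mm X P (Af m)))" by (rule tr_cong) (rule mm_assoc[OF fin])
  also have "\<dots> = tr X (mm X Q (mm X (Bf m) P))"
    using com by (intro tr_cong mm_congR) auto
  also have "\<dots> = tr X (mm X (mm X Q (Bf m)) P)" by (rule tr_cong) (rule mm_assoc[OF fin, symmetric])
  also have "\<dots> = tr X (mm X P (mm X Q (Bf m)))" by (rule tr_comm)
  also have "\<dots> = tr X (mm X (mm X P Q) (Bf m))" by (rule tr_cong) (rule mm_assoc[OF fin, symmetric])
  also have "\<dots> = tr X (Bf m)"
  proof (rule tr_cong)
    fix x assume x: "x \<in> X"
    have "mm X (mm X P Q) (Bf m) x x = mm X idm (Bf m) x x" using PQ x by (intro mm_congL) auto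
    then show "mm X (mm X P Q) (Bf m) x x = Bf m x x" using x fin by (simp add: mm_idL)
  qed
  finally show ?thesis .
qed



lemma map_funpow: "(map (s::nat \<Rightarrow> nat) ^^ m) = map (s ^^ m)"
  by (induction m) (simp_all add: fun_eq_iff map_idI)

lemma permutes_funpow':
  assumes "p permutes S" shows "(p ^^ n) permutes S"
  using assms by (induct n) (simp add: permutes_def, metis funpow_Suc_right permutes_compose)

lemma finite_tuples: "finite (tuples k n)"
proof -
  have "tuples k n \<subseteq> {xs. set xs \<subseteq> {1..n} \<and> length xs = k}" unfolding tuples_def by auto
  then show ?thesis using finite_lists_length_eq[of "{1..n}" k] finite_subset by blast
qed

lemma tuples_map: assumes s: "s permutes {1..n}" and xs: "xs \<in> tuples k n" shows "map s xs \<in> tuples k n"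
proof -
  have sub: "set xs \<subseteq> {1..n}" and d: "distinct xs" and l: "length xs = k" using xs by (auto simp: tuples_def)
  have "inj_on s (set xs)" using permutes_inj[OF s] by (auto intro: inj_on_subset)
  then have "distinct (map s xs)" using d by (simp add: distinct_map)
  moreover have "set (map s xs) \<subseteq> {1..n}" using sub permutes_in_image[OF s] by auto
  ultimately show ?thesis using l by (simp add: tuples_def)
qed

lemma good_tuples: assumes "s permutes {1..n}" shows "good (map s) (tuples k n)"
proof -
  have inj: "inj (map s)" using permutes_inj[OF assms] by (simp add: inj_mapI)
  have "map s ` tuples k n \<subseteq> tuples k n" using tuples_map[OF assms] by auto
  moreover have "tuples k n \<subseteq> map s ` tuples k n"
  proof
    fix xs assume xs: "xs \<in> tuples k n"
    have iv: "inv s permutes {1..n}" using permutes_inv[OF assms] .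
    have "map s (map (inv s) xs) = xs"
      using permutes_inverses(1)[OF assms] by (simp add: map_idI)
    moreover have "map (inv s) xs \<in> tuples k n" using tuples_map[OF iv xs] .
    ultimately show "xs \<in> map s ` tuples k n" by (metis image_eqI)
  qed
  ultimately show ?thesis unfolding good_def using finite_tuples inj by (auto intro: inj_on_subset)
qed

lemma perm_rep_mult:
  assumes s: "s permutes {1..n}" and y: "y \<in> tuples k n"
  shows "mm (tuples k n) (perm_rep s) (perm_rep (s ^^ m)) x y = (perm_rep (s ^^ Suc m) x y :: 'a::field)"
proof -
  have sm: "(s ^^ m) permutes {1..n}" using s by (rule permutes_funpow')
  have yin: "map (s ^^ m) y \<in> tuples k n" using tuples_map[OF sm y] .
  have "mm (tuples k n) (perm_rep s) (perm_rep (s ^^ m)) x y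
      = (\<Sum>z\<in>tuples k n. if map (s ^^ m) y = z then (perm_rep s x z :: 'a) else 0)"
    unfolding mm_def by (rule sum.cong) (auto simp: perm_rep_def)
  also have "\<dots> = perm_rep s x (map (s ^^ m) y)"
    using yin finite_tuples by (simp add: sum.delta)
  also have "\<dots> = perm_rep (s ^^ Suc m) x y" by (simp add: perm_rep_def)
  finally show ?thesis .
qed

lemma perm_rep_0: "perm_rep (s ^^ 0) x y = idm x y"
  by (auto simp: perm_rep_def idm_def)

lemma tr_perm_rep: assumes "finite X" shows "tr X (perm_rep p) = (of_nat (card {x\<in>X. map p x = x}) :: 'a::field)"
proof -
  have "tr X (perm_rep p) = (\<Sum>x\<in>X. if map p x = x then (1::'a) else 0)"
    unfolding tr_def perm_rep_def ..
  also have "\<dots> = (\<Sum>x\<in>{x\<in>X. map p x = x}. (1::'a))"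
    using \<open>finite X\<close> by (rule sum.inter_filter[symmetric])
  also have "\<dots> = of_nat (card {x\<in>X. map p x = x})" by simp
  finally show ?thesis .
qed

definition fixc :: "nat \<Rightarrow> (nat \<Rightarrow> nat) \<Rightarrow> nat" where
  "fixc n p = card {i\<in>{1..n}. p i = i}"

lemma card_lists3:
  assumes "finite A"
  shows "card {xs. length xs = 3 \<and> distinct xs \<and> set xs \<subseteq> A} = (if card A < 3 then 0 else card A * (card A - 1) * (card A - 2))"
proof (cases "card A < 3")
  case True
  have e: "{xs. length xs = 3 \<and> distinct xs \<and> set xs \<subseteq> A} = {}"
  proof (rule ccontr)
    assume "{xs. length xs = 3 \<and> distinct xs \<and> set xs \<subseteq> A} \<noteq> {}"
    then obtain xs where "length xs = 3" "distinct xs" "set xs \<subseteq> A" by blast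
    then have "3 \<le> card A" using card_mono[OF assms] distinct_card by metis
    then show False using True by simp
  qed
  show ?thesis using True by (simp only: e card.empty if_True)
next
  case False
  then obtain k where k: "card A = k + 3" by (metis add.commute le_add_diff_inverse not_less)
  have "card {xs. length xs = 3 \<and> distinct xs \<and> set xs \<subseteq> A} = \<Prod>{card A - 3 + 1 .. card A}"
    using card_lists_distinct_length_eq[OF assms] False by simp
  also have "\<dots> = \<Prod>{k+1 .. k+3}" using k by simp
  also have "\<dots> = (k+1) * (k+2) * (k+3)"
    by (simp add: prod.nat_ivl_Suc' numeral_3_eq_3 numeral_2_eq_2 atLeastAtMostSuc_conv)
  finally show ?thesis using k False by (simp add: algebra_simps)
qed

lemma cube_inj:
  fixes a b :: nat
  assumes "a \<ge> 3" "b \<ge> 3" "a * (a - 1) * (a - 2) = b * (b - 1) * (b - 2)"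
  shows "a = b"
proof -
  have mono: "x * (x - 1) * (x - 2) < y * (y - 1) * (y - 2)" if "3 \<le> x" "x < y" for x y :: nat
  proof -
    have "x * (x - 1) < y * (y - 1)" using that by (intro mult_strict_mono) auto
    then show ?thesis using that by (intro mult_strict_mono) auto
  qed
  show ?thesis using mono[of a b] mono[of b a] assms by (cases a b rule: linorder_cases) auto
qed

lemma map_fix_iff: "map p x = x \<longleftrightarrow> (\<forall>i\<in>set x. p i = i)"
  by (induction x) auto

lemma tuples_fix_card:
  "card {x\<in>tuples 3 n. map p x = x} = (if fixc n p < 3 then 0 else fixc n p * (fixc n p - 1) * (fixc n p - 2))"
proof -
  have "{x\<in>tuples 3 n. map p x = x} = {xs. length xs = 3 \<and> distinct xs \<and> set xs \<subseteq> {i\<in>{1..n}. p i = i}}"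
    unfolding tuples_def using map_fix_iff[of p] by blast
  then show ?thesis unfolding fixc_def by (simp add: card_lists3)
qed



definition fx :: "'a set \<Rightarrow> ('a \<Rightarrow> 'a) \<Rightarrow> nat \<Rightarrow> nat" where
  "fx S f m = card {z\<in>S. (f ^^ m) z = z}"

definition pc :: "'a set \<Rightarrow> ('a \<Rightarrow> 'a) \<Rightarrow> nat \<Rightarrow> nat" where
  "pc S f d = card {z\<in>S. per f z = d}"

lemma fx_per: assumes "good f S" shows "fx S f m = card {z\<in>S. per f z dvd m}"
proof -
  have "{z\<in>S. (f ^^ m) z = z} = {z\<in>S. per f z dvd m}" using per_dvd[OF assms] by blast
  then show ?thesis unfolding fx_def by simp
qed

lemma card_perclass_sum:
  assumes "finite S" "finite D"
  shows "card {z\<in>S. per f z \<in> D} = (\<Sum>d\<in>D. pc S f d)"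
  using assms(2)
proof (induction D rule: finite_induct)
  case empty then show ?case by simp
next
  case (insert d D)
  have "{z\<in>S. per f z \<in> insert d D} = {z\<in>S. per f z = d} \<union> {z\<in>S. per f z \<in> D}" by auto
  moreover have "{z\<in>S. per f z = d} \<inter> {z\<in>S. per f z \<in> D} = {}" using insert by auto
  moreover have "finite {z\<in>S. per f z = d}" "finite {z\<in>S. per f z \<in> D}" using assms(1) by auto
  ultimately have "card {z\<in>S. per f z \<in> insert d D} = pc S f d + card {z\<in>S. per f z \<in> D}"
    unfolding pc_def by (simp add: card_Un_disjoint)
  then show ?case using insert by simp
qed

lemma pc_dvd: assumes "good f S" shows "d dvd pc S f d"
proof -
  have "d dvd card {z\<in>S. per f z \<in> {d}}" by (rule perclass_dvd[OF assms]) simp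
  then show ?thesis unfolding pc_def by simp
qed

lemma pc_ge: assumes g: "good f S" and x: "x \<in> S" shows "per f x \<le> pc S f (per f x)"
proof -
  have fin: "finite S" using g by (simp add: good_def)
  have "x \<in> {z\<in>S. per f z = per f x}" using x by simp
  then have "pc S f (per f x) > 0" unfolding pc_def using fin
    by (metis (no_types, lifting) card_gt_0_iff empty_iff finite_subset mem_Collect_eq subsetI)
  then show ?thesis using pc_dvd[OF g, of "per f x"] by (simp add: dvd_imp_le)
qed

lemma small:
  assumes g: "good f S" and m: "fx S f m \<le> 2" and x: "x \<in> S" and d: "per f x dvd m"
  shows "per f x \<le> 2"
proof -
  have fin: "finite S" using g by (simp add: good_def)
  have "{z\<in>S. per f z = per f x} \<subseteq> {z\<in>S. per f z dvd m}" using d by auto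
  then have "pc S f (per f x) \<le> fx S f m" unfolding pc_def fx_per[OF g]
    by (rule card_mono[rotated]) (simp add: fin)
  then show ?thesis using pc_ge[OF g x] m by simp
qed

lemma odd_fix_small:
  assumes g: "good f S" and m: "fx S f m \<le> 2" and o: "odd m"
  shows "{z\<in>S. per f z dvd m} = {z\<in>S. per f z = 1}"
proof -
  have *: "per f z = 1" if z: "z \<in> S" "per f z dvd m" for z
  proof -
    have "per f z \<le> 2" using small[OF g m z] .
    moreover have "per f z \<noteq> 2"
    proof
      assume "per f z = 2"
      then have "2 dvd m" using z(2) by simp
      then show False using o by simp
    qed
    moreover have "per f z > 0" using per_props(1)[OF g z(1)] .
    ultimately show ?thesis by linarith
  qed
  show ?thesis
  proof (rule set_eqI)
    fix z
    have "per f z = 1 \<Longrightarrow> per f z dvd m" by simp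
    then show "z \<in> {z\<in>S. per f z dvd m} \<longleftrightarrow> z \<in> {z\<in>S. per f z = 1}"
      using *[of z] by blast
  qed
qed

lemma le2_odd: "(x::nat) \<le> 2 \<Longrightarrow> odd x \<Longrightarrow> x = 1" by presburger

lemma two_even_lemma: "(a::nat) \<noteq> b \<Longrightarrow> even a \<Longrightarrow> even b \<Longrightarrow> a \<le> 2 \<Longrightarrow> b \<le> 2 \<Longrightarrow> (a = 2 \<and> b = 0) \<or> (a = 0 \<and> b = 2)"
  by presburger

lemma mod_cancel_lemma:
  fixes a b m u v :: nat
  assumes "a < m" "b < m" "m dvd u" "m dvd v" "a + u = b + v"
  shows "a = b"
proof -
  obtain x y where "u = m * x" "v = m * y" using assms(3,4) by (auto elim!: dvdE)
  then have "(a + u) mod m = a" "(b + v) mod m = b" using assms(1,2) by simp_all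
  then show ?thesis using assms(5) by simp
qed

locale twoperm =
  fixes f g :: "'a \<Rightarrow> 'a" and S :: "'a set"
  assumes gf: "good f S" and gg: "good g S" and oddS: "odd (card S)" and S3: "3 \<le> card S"
    and H: "\<And>m. (fx S f m < 3 \<and> fx S g m < 3) \<or> fx S f m = fx S g m"
begin

lemma swap: "twoperm g f S"
  unfolding twoperm_def using gf gg oddS S3 H by metis

lemma finS: "finite S" using gf by (simp add: good_def)

lemma fx1: assumes "good h S" shows "fx S h 1 = pc S h 1"
  unfolding fx_per[OF assms] pc_def by simp

lemma fxM_odd:
  assumes gh: "good h S"
  defines "M \<equiv> \<Prod>i\<in>{i\<in>{..card S}. odd i}. i"
  shows "odd M" "fx S h M = card {z\<in>S. odd (per h z)}" "odd (fx S h M)"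
proof -
  show oM: "odd M" unfolding M_def by (subst even_prod_iff) auto
  have "per h z dvd M \<longleftrightarrow> odd (per h z)" if z: "z \<in> S" for z
  proof
    assume "per h z dvd M"
    then show "odd (per h z)" using oM by (meson dvd_trans)
  next
    assume "odd (per h z)"
    moreover have "per h z \<le> card S" using per_le[OF gh z] .
    ultimately have "per h z \<in> {i\<in>{..card S}. odd i}" by simp
    then show "per h z dvd M" unfolding M_def using dvd_prodI[of "{i\<in>{..card S}. odd i}" "per h z" "\<lambda>i. i"] by simp
  qed
  then have "{z\<in>S. per h z dvd M} = {z\<in>S. odd (per h z)}" by blast
  then show fxM: "fx S h M = card {z\<in>S. odd (per h z)}" unfolding fx_per[OF gh] by simp
  have "2 dvd card {z\<in>S. per h z \<in> {d. even d}}" by (rule perclass_dvd[OF gh]) auto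
  then have ev: "even (card {z\<in>S. even (per h z)})" by simp
  have "S = {z\<in>S. odd (per h z)} \<union> {z\<in>S. even (per h z)}" by auto
  moreover have "{z\<in>S. odd (per h z)} \<inter> {z\<in>S. even (per h z)} = {}" by auto
  ultimately have "card S = card {z\<in>S. odd (per h z)} + card {z\<in>S. even (per h z)}"
    using finS by (metis (no_types, lifting) card_Un_disjoint finite_Un)
  then show "odd (fx S h M)" using fxM ev oddS by auto
qed

lemma A: "pc S f 1 = pc S g 1"
proof (rule ccontr)
  assume ne: "pc S f 1 \<noteq> pc S g 1"
  have b1: "fx S f 1 < 3" "fx S g 1 < 3" using H[of 1] ne fx1[OF gf] fx1[OF gg] by auto
  define M where "M = (\<Prod>i\<in>{i\<in>{..card S}. odd i}. i)"
  note Mf = fxM_odd[OF gf, folded M_def] and Mg = fxM_odd[OF gg, folded M_def]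
  define P where "P m \<longleftrightarrow> odd m \<and> (3 \<le> fx S f m \<or> 3 \<le> fx S g m)" for m
  have PM: "P M"
  proof (rule ccontr)
    assume "\<not> P M"
    then have s: "fx S f M \<le> 2" "fx S g M \<le> 2" using Mf(1) unfolding P_def by auto
    have "fx S f M = pc S f 1" using odd_fix_small[OF gf s(1) Mf(1)] unfolding fx_per[OF gf] pc_def by simp
    moreover have "fx S g M = pc S g 1" using odd_fix_small[OF gg s(2) Mf(1)] unfolding fx_per[OF gg] pc_def by simp
    moreover have "fx S f M = 1" using s(1) Mf(3) le2_odd by blast
    moreover have "fx S g M = 1" using s(2) Mg(3) le2_odd by blast
    ultimately show False using ne by simp
  qed
  define m where "m = (LEAST m. P m)"
  have Pm: "P m" unfolding m_def using PM by (rule LeastI)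
  have mn: "\<not> P e" if "e < m" for e using not_less_Least[of e P] that unfolding m_def by blast
  have om: "odd m" using Pm unfolding P_def by simp
  have "m \<noteq> 1" using Pm b1 unfolding P_def by auto
  then have m3: "m \<ge> 3" using om by presburger
  have eqm: "fx S f m = fx S g m" using H[of m] Pm unfolding P_def by auto
  have setm: "{z\<in>S. per h z dvd m} = {z\<in>S. per h z \<in> {1, m}}"
    if gh: "good h S" and bd: "\<And>e. odd e \<Longrightarrow> e < m \<Longrightarrow> fx S h e < 3" for h
  proof -
    have "per h z \<in> {1, m}" if z: "z \<in> S" "per h z dvd m" for z
    proof (rule ccontr)
      assume nin: "per h z \<notin> {1, m}"
      have "per h z \<le> m" using z(2) m3 by (simp add: dvd_imp_le)
      then have lt: "per h z < m" using nin by simp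
      have od: "odd (per h z)" using z(2) om by (meson dvd_trans)
      have "fx S h (per h z) \<le> 2" using bd[OF od lt] by simp
      then have "per h z \<le> 2" using small[OF gh _ z(1)] by simp
      then show False using od nin le2_odd by auto
    qed
    then show ?thesis by auto
  qed
  have bdf: "fx S f e < 3" if "odd e" "e < m" for e using mn[OF that(2)] that(1) unfolding P_def by auto
  have bdg: "fx S g e < 3" if "odd e" "e < m" for e using mn[OF that(2)] that(1) unfolding P_def by auto
  have "fx S f m = pc S f 1 + pc S f m"
  proof -
    have "fx S f m = card {z\<in>S. per f z dvd m}" by (rule fx_per[OF gf])
    also have "\<dots> = card {z\<in>S. per f z \<in> {1, m}}" using setm[OF gf bdf] by simp
    also have "\<dots> = (\<Sum>d\<in>{1, m}. pc S f d)" by (rule card_perclass_sum[OF finS]) simp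
    finally show ?thesis using m3 by simp
  qed
  moreover have "fx S g m = pc S g 1 + pc S g m"
  proof -
    have "fx S g m = card {z\<in>S. per g z dvd m}" by (rule fx_per[OF gg])
    also have "\<dots> = card {z\<in>S. per g z \<in> {1, m}}" using setm[OF gg bdg] by simp
    also have "\<dots> = (\<Sum>d\<in>{1, m}. pc S g d)" by (rule card_perclass_sum[OF finS]) simp
    finally show ?thesis using m3 by simp
  qed
  moreover have "pc S f 1 < m" "pc S g 1 < m" using b1 fx1[OF gf] fx1[OF gg] m3 by auto
  ultimately have "pc S f 1 = pc S g 1"
    using mod_cancel_lemma[of "pc S f 1" m "pc S g 1" "pc S f m" "pc S g m"] pc_dvd[OF gf] pc_dvd[OF gg] eqm
    by simp
  then show False using ne by simp
qed

lemma B_odd: assumes "odd m" shows "fx S f m = fx S g m"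
proof (cases "fx S f m = fx S g m")
  case False
  then have s: "fx S f m \<le> 2" "fx S g m \<le> 2" using H[of m] by auto
  have "fx S f m = pc S f 1" using odd_fix_small[OF gf s(1) assms] unfolding fx_per[OF gf] pc_def by simp
  moreover have "fx S g m = pc S g 1" using odd_fix_small[OF gg s(2) assms] unfolding fx_per[OF gg] pc_def by simp
  ultimately show ?thesis using A by simp
qed simp


lemma per_dvd2: assumes gh: "good h S" and z: "z \<in> S" and d: "per h z dvd 2"
  shows "per h z \<in> {1, 2}"
proof -
  have "per h z \<le> 2" using d by (simp add: dvd_imp_le)
  then show ?thesis using per_props(1)[OF gh z] by auto
qed

lemma C:
  assumes p1: "pc S f 1 = 0" and q1: "pc S g 1 = 0" and p2: "pc S f 2 = 2" and q2: "pc S g 2 = 0"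
  shows False
proof -
  define P where "P m \<longleftrightarrow> even m \<and> 0 < m \<and> (3 \<le> fx S f m \<or> 3 \<le> fx S g m)" for m
  have PN: "P (2 * fact (card S))"
  proof -
    have "{z\<in>S. per f z dvd 2 * fact (card S)} = S"
    proof -
      have "per f z dvd 2 * fact (card S)" if z: "z \<in> S" for z
      proof -
        have "per f z dvd fact (card S)"
          using dvd_fact[of "per f z" "card S"] per_props(1)[OF gf z] per_le[OF gf z] by simp
        then show ?thesis by simp
      qed
      then show ?thesis by blast
    qed
    then have "fx S f (2 * fact (card S)) = card S" unfolding fx_per[OF gf] by simp
    then show ?thesis unfolding P_def using S3 by simp
  qed
  define m where "m = (LEAST m. P m)"
  have Pm: "P m" unfolding m_def using PN by (rule LeastI)
  have mn: "\<not> P e" if "e < m" for e using not_less_Least[of e P] that unfolding m_def by blast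
  have em: "even m" and m0: "0 < m" using Pm unfolding P_def by auto
  have fx2: "fx S h 2 = pc S h 1 + pc S h 2" if gh: "good h S" for h
  proof -
    have "fx S h 2 = card {z\<in>S. per h z dvd 2}" by (rule fx_per[OF gh])
    also have "\<dots> = card {z\<in>S. per h z \<in> {1, 2}}"
      using per_dvd2[OF gh] by (intro arg_cong[where f=card]) auto
    also have "\<dots> = (\<Sum>d\<in>{1, 2}. pc S h d)" by (rule card_perclass_sum[OF finS]) simp
    finally show ?thesis by simp
  qed
  have "\<not> P 2" unfolding P_def using fx2[OF gf] fx2[OF gg] p1 p2 q1 q2 by simp
  then have "m \<noteq> 2" using Pm by auto
  then have m4: "4 \<le> m" using em m0 by presburger
  have eqm: "fx S f m = fx S g m" using H[of m] Pm unfolding P_def by auto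
  have bdf: "fx S f e < 3" if "even e" "0 < e" "e < m" for e using mn[OF that(3)] that unfolding P_def by auto
  have bdg: "fx S g e < 3" if "even e" "0 < e" "e < m" for e using mn[OF that(3)] that unfolding P_def by auto
  have claim: "per h z = 1 \<or> per h z = 2 \<or> per h z = m \<or> (odd (per h z) \<and> 2 * per h z = m)"
    if gh: "good h S" and bd: "\<And>e. even e \<Longrightarrow> 0 < e \<Longrightarrow> e < m \<Longrightarrow> fx S h e < 3"
      and z: "z \<in> S" and dv: "per h z dvd m" for h z
  proof -
    define d where "d = per h z"
    have d0: "0 < d" unfolding d_def using per_props(1)[OF gh z] .
    have dm: "d \<le> m" unfolding d_def using dv m0 by (simp add: dvd_imp_le)
    show ?thesis
    proof (cases "even d")
      case True
      show ?thesis
      proof (cases "d < m")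
        case True
        have "fx S h d \<le> 2" using bd[OF \<open>even d\<close> d0 True] by simp
        then have "d \<le> 2" using small[OF gh _ z] unfolding d_def by simp
        then have "d = 2" using \<open>even d\<close> d0 by presburger
        then show ?thesis unfolding d_def by simp
      next
        case False
        then show ?thesis using dm unfolding d_def by simp
      qed
    next
      case False
      show ?thesis
      proof (cases "2 * d < m")
        case True
        have "fx S h (2 * d) \<le> 2" using bd[OF _ _ True] d0 by simp
        moreover have "per h z dvd 2 * d" unfolding d_def by simp
        ultimately have "d \<le> 2" using small[OF gh _ z] unfolding d_def by blast
        then have "d = 1" using False d0 by presburger
        then show ?thesis unfolding d_def by simp
      next
        case ge: False
        obtain c where c: "m = d * c" using dv unfolding d_def by (auto elim!: dvdE)
        have "even c" using c em False by simp
        moreover have "c \<le> 2" using ge c d0 by (metis mult.commute mult_le_cancel2 not_less)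
        moreover have "c \<noteq> 0" using c m0 by auto
        ultimately have "c = 2" by presburger
        then show ?thesis using c False unfolding d_def by simp
      qed
    qed
  qed
  have sum4: "fx S h m = (\<Sum>d\<in>D. pc S h d)"
    if gh: "good h S" and DD: "finite D" and eqD: "\<And>z. z \<in> S \<Longrightarrow> per h z dvd m \<longleftrightarrow> per h z \<in> D" for h D
  proof -
    have "fx S h m = card {z\<in>S. per h z dvd m}" by (rule fx_per[OF gh])
    also have "\<dots> = card {z\<in>S. per h z \<in> D}" using eqD by (intro arg_cong[where f=card]) auto
    also have "\<dots> = (\<Sum>d\<in>D. pc S h d)" by (rule card_perclass_sum[OF finS DD])
    finally show ?thesis .
  qed
  have m2: "2 dvd m" using em by simp
  show False
  proof (cases "even (m div 2)")
    case True
    have eqD: "per h z dvd m \<longleftrightarrow> per h z \<in> {1, 2, m}"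
      if gh: "good h S" and bd: "\<And>e. even e \<Longrightarrow> 0 < e \<Longrightarrow> e < m \<Longrightarrow> fx S h e < 3" and z: "z \<in> S" for h z
    proof
      assume dv: "per h z dvd m"
      have "\<not> (odd (per h z) \<and> 2 * per h z = m)" using True by auto
      then show "per h z \<in> {1, 2, m}" using claim[OF gh bd z dv] by auto
    next
      assume "per h z \<in> {1, 2, m}"
      then show "per h z dvd m" using m2 by auto
    qed
    have "fx S f m = pc S f 1 + pc S f 2 + pc S f m"
      using sum4[OF gf _ eqD[OF gf bdf]] m4 by simp
    moreover have "fx S g m = pc S g 1 + pc S g 2 + pc S g m"
      using sum4[OF gg _ eqD[OF gg bdg]] m4 by simp
    ultimately have "2 + pc S f m = 0 + pc S g m" using eqm p1 p2 q1 q2 by simp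
    then have "2 = (0::nat)"
      using mod_cancel_lemma[of 2 m 0 "pc S f m" "pc S g m"] m4 pc_dvd[OF gf] pc_dvd[OF gg] by simp
    then show False by simp
  next
    case False
    define k where "k = m div 2"
    have mk: "m = 2 * k" unfolding k_def using em by simp
    have ok: "odd k" using False unfolding k_def by simp
    have k3: "3 \<le> k" using m4 mk ok by presburger
    have eqD: "per h z dvd m \<longleftrightarrow> per h z \<in> {1, 2, k, m}"
      if gh: "good h S" and bd: "\<And>e. even e \<Longrightarrow> 0 < e \<Longrightarrow> e < m \<Longrightarrow> fx S h e < 3" and z: "z \<in> S" for h z
    proof
      assume dv: "per h z dvd m"
      show "per h z \<in> {1, 2, k, m}" using claim[OF gh bd z dv] mk by auto
    next
      assume "per h z \<in> {1, 2, k, m}"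
      then show "per h z dvd m" using m2 mk by auto
    qed
    have eqK: "per h z dvd k \<longleftrightarrow> per h z \<in> {1, k}"
      if gh: "good h S" and bd: "\<And>e. even e \<Longrightarrow> 0 < e \<Longrightarrow> e < m \<Longrightarrow> fx S h e < 3" and z: "z \<in> S" for h z
    proof
      assume dv: "per h z dvd k"
      then have dvm: "per h z dvd m" using mk by simp
      have "per h z \<noteq> 2" using dv ok by auto
      moreover have "per h z \<noteq> m"
      proof
        assume "per h z = m"
        then have "m dvd k" using dv by simp
        then have "m \<le> k" using k3 by (simp add: dvd_imp_le)
        then show False using mk k3 by simp
      qed
      ultimately show "per h z \<in> {1, k}" using claim[OF gh bd z dvm] mk by auto
    next
      assume "per h z \<in> {1, k}"
      then show "per h z dvd k" by auto
    qed
    have fk: "fx S h k = (\<Sum>d\<in>{1, k}. pc S h d)"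
      if gh: "good h S" and bd: "\<And>e. even e \<Longrightarrow> 0 < e \<Longrightarrow> e < m \<Longrightarrow> fx S h e < 3" for h
    proof -
      have "fx S h k = card {z\<in>S. per h z dvd k}" by (rule fx_per[OF gh])
      also have "\<dots> = card {z\<in>S. per h z \<in> {1, k}}" using eqK[OF gh bd] by (intro arg_cong[where f=card]) auto
      also have "\<dots> = (\<Sum>d\<in>{1, k}. pc S h d)" by (rule card_perclass_sum[OF finS]) simp
      finally show ?thesis .
    qed
    have "pc S f k = pc S g k"
      using fk[OF gf bdf] fk[OF gg bdg] B_odd[OF ok] k3 p1 q1 by simp
    moreover have "fx S f m = pc S f 1 + pc S f 2 + pc S f k + pc S f m"
      using sum4[OF gf _ eqD[OF gf bdf]] m4 k3 mk by simp
    moreover have "fx S g m = pc S g 1 + pc S g 2 + pc S g k + pc S g m"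
      using sum4[OF gg _ eqD[OF gg bdg]] m4 k3 mk by simp
    ultimately have "2 + pc S f m = 0 + pc S g m" using eqm p1 p2 q1 q2 by simp
    then have "2 = (0::nat)"
      using mod_cancel_lemma[of 2 m 0 "pc S f m" "pc S g m"] m4 pc_dvd[OF gf] pc_dvd[OF gg] by simp
    then show False by simp
  qed
qed

lemma all_eq: assumes m0: "0 < m" shows "fx S f m = fx S g m"
proof (cases "odd m")
  case True then show ?thesis by (rule B_odd)
next
  case False
  show ?thesis
  proof (rule ccontr)
    assume ne: "fx S f m \<noteq> fx S g m"
    then have s: "fx S f m \<le> 2" "fx S g m \<le> 2" using H[of m] by auto
    have fx12: "fx S h m = pc S h 1 + pc S h 2" if gh: "good h S" and sh: "fx S h m \<le> 2" for h
    proof -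
      have eqD: "per h z dvd m \<longleftrightarrow> per h z \<in> {1, 2}" if z: "z \<in> S" for z
      proof
        assume dv: "per h z dvd m"
        have "per h z \<le> 2" by (rule small[OF gh sh z dv])
        then show "per h z \<in> {1, 2}" using per_props(1)[OF gh z] by auto
      next
        assume "per h z \<in> {1, 2}"
        then show "per h z dvd m" using False by auto
      qed
      have "fx S h m = card {z\<in>S. per h z dvd m}" by (rule fx_per[OF gh])
      also have "\<dots> = card {z\<in>S. per h z \<in> {1, 2}}" using eqD by (intro arg_cong[where f=card]) auto
      also have "\<dots> = (\<Sum>d\<in>{1, 2}. pc S h d)" by (rule card_perclass_sum[OF finS]) simp
      finally show ?thesis by simp
    qed
    have ff: "fx S f m = pc S f 1 + pc S f 2" by (rule fx12[OF gf s(1)])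
    have gg': "fx S g m = pc S g 1 + pc S g 2" by (rule fx12[OF gg s(2)])
    have ev2: "even (pc S f 2)" "even (pc S g 2)" using pc_dvd[OF gf, of 2] pc_dvd[OF gg, of 2] by auto
    have "pc S f 2 \<noteq> pc S g 2" using ne ff gg' A by simp
    then have "(pc S f 2 = 2 \<and> pc S g 2 = 0) \<or> (pc S f 2 = 0 \<and> pc S g 2 = 2)"
      using ev2 s ff gg' two_even_lemma[of "pc S f 2" "pc S g 2"] by linarith
    then show False
    proof
      assume h: "pc S f 2 = 2 \<and> pc S g 2 = 0"
      then have "pc S f 1 = 0" using s ff by simp
      then show False using C[of] h A by simp
    next
      assume h: "pc S f 2 = 0 \<and> pc S g 2 = 2"
      then have "pc S g 1 = 0" using s gg' by simp
      then show False using twoperm.C[OF swap] h A by simp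
    qed
  qed
qed

end



lemma good_perm: assumes "s permutes {1..n}" shows "good s {1..(n::nat)}"
  unfolding good_def using permutes_inj[OF assms] permutes_image[OF assms]
  by (auto intro: inj_on_subset)

lemma conj_from_iso:
  assumes s: "s permutes {1..n}" and t: "t permutes {1..n}"
    and h: "bij_betw h {1..n} {1..n}" "\<forall>x\<in>{1..n}. h (s x) = t (h x)"
  shows "conj_Sn n s t"
proof -
  define g where "g z = (if z \<in> {1..n} then h z else z)" for z
  have "bij_betw g {1..n} {1..n}" using h(1) by (rule bij_betw_cong[THEN iffD1, rotated]) (simp add: g_def)
  then have gp: "g permutes {1..n}" by (rule bij_imp_permutes) (auto simp: g_def)
  have com: "g (s z) = t (g z)" for z
  proof (cases "z \<in> {1..n}")
    case True
    then have "s z \<in> {1..n}" using permutes_in_image[OF s] by simp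
    then show ?thesis using True h(2) by (simp add: g_def)
  next
    case False
    then show ?thesis using permutes_not_in[OF s False] permutes_not_in[OF t False] using False by (auto simp: g_def)
  qed
  have "t = g \<circ> s \<circ> inv g"
  proof
    fix x
    have "(g \<circ> s \<circ> inv g) x = t (g (inv g x))" using com by simp
    also have "\<dots> = t x" using permutes_inverses(1)[OF gp] by simp
    finally show "t x = (g \<circ> s \<circ> inv g) x" by simp
  qed
  then show ?thesis unfolding conj_Sn_def using gp by blast
qed

lemma odd_case:
  assumes n3: "n \<ge> 3" and on: "odd n" and s: "s permutes {1..n}" and t: "t permutes {1..n}"
    and sim: "similar_on (tuples 3 n) (perm_rep s) (perm_rep t :: nat list \<Rightarrow> nat list \<Rightarrow> complex)"
  shows "conj_Sn n s t"
proof -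
  let ?X = "tuples 3 n"
  have trs: "tr ?X (perm_rep (s ^^ m) :: nat list \<Rightarrow> nat list \<Rightarrow> complex) = tr ?X (perm_rep (t ^^ m))" for m
  proof (rule sim_pow_trace[where Af = "\<lambda>m. perm_rep (s ^^ m)" and Bf = "\<lambda>m. perm_rep (t ^^ m)"])
    show "finite ?X" by (rule finite_tuples)
    show "similar_on ?X (perm_rep (s ^^ 1)) (perm_rep (t ^^ 1) :: nat list \<Rightarrow> nat list \<Rightarrow> complex)" using sim by simp
    show "mm ?X (perm_rep (s ^^ 1)) (perm_rep (s ^^ m)) x y = (perm_rep (s ^^ Suc m) x y :: complex)"
      if "x \<in> ?X" "y \<in> ?X" for m x y using perm_rep_mult[OF s that(2)] by simp
    show "mm ?X (perm_rep (t ^^ 1)) (perm_rep (t ^^ m)) x y = (perm_rep (t ^^ Suc m) x y :: complex)"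
      if "x \<in> ?X" "y \<in> ?X" for m x y using perm_rep_mult[OF t that(2)] by simp
    show "perm_rep (s ^^ 0) x y = (idm x y :: complex)" for x y by (rule perm_rep_0)
    show "perm_rep (t ^^ 0) x y = (idm x y :: complex)" for x y by (rule perm_rep_0)
  qed
  have cards: "card {x\<in>?X. map (s ^^ m) x = x} = card {x\<in>?X. map (t ^^ m) x = x}" for m
    using trs[of m] unfolding tr_perm_rep[OF finite_tuples] by simp
  have fxeq: "fx {1..n} s m = fixc n (s ^^ m)" "fx {1..n} t m = fixc n (t ^^ m)" for m
    unfolding fx_def fixc_def by simp_all
  have H: "(fx {1..n} s m < 3 \<and> fx {1..n} t m < 3) \<or> fx {1..n} s m = fx {1..n} t m" for m
  proof -
    let ?a = "fixc n (s ^^ m)" and ?b = "fixc n (t ^^ m)"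
    have e: "(if ?a < 3 then 0 else ?a * (?a - 1) * (?a - 2)) = (if ?b < 3 then 0 else ?b * (?b - 1) * (?b - 2))"
      using cards[of m] unfolding tuples_fix_card .
    have pos: "0 < x * (x - 1) * (x - 2)" if "\<not> x < 3" for x :: nat using that by simp
    show ?thesis unfolding fxeq
    proof (cases "?a < 3"; cases "?b < 3")
      assume "\<not> ?a < 3" "\<not> ?b < 3"
      then show "(?a < 3 \<and> ?b < 3) \<or> ?a = ?b" using e cube_inj[of ?a ?b] by simp
    qed (use e pos in \<open>auto split: if_splits\<close>)
  qed
  interpret twoperm s t "{1..n}"
    using good_perm[OF s] good_perm[OF t] on n3 H by unfold_locales auto
  have "\<forall>m>0. card {x\<in>{1..n}. (s ^^ m) x = x} = card {y\<in>{1..n}. (t ^^ m) y = y}"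
    using all_eq unfolding fx_def by blast
  then obtain h where "bij_betw h {1..n} {1..n}" "\<forall>x\<in>{1..n}. h (s x) = t (h x)"
    using iso[OF good_perm[OF s] good_perm[OF t]] by blast
  then show ?thesis using conj_from_iso[OF s t] by blast
qed



definition swp :: "nat \<Rightarrow> nat \<Rightarrow> nat \<Rightarrow> nat" where
  "swp a n z = (if z \<in> {a..n} then (if odd z then z + 1 else z - 1) else z)"

lemma swp_invol:
  assumes "odd a" "even n"
  shows "swp a n (swp a n z) = z"
  using assms unfolding swp_def by (auto; presburger)

lemma swp_in: assumes "odd a" "even n" "z \<in> {a..n}" shows "swp a n z \<in> {a..n}"
  using assms unfolding swp_def by (auto; presburger)

lemma swp_ne: assumes "odd a" "z \<in> {a..n}" shows "swp a n z \<noteq> z"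
  using assms unfolding swp_def by (auto; presburger)

lemma swp_in1: assumes "odd a" "even n" "1 \<le> a" "z \<in> {1..n}" shows "swp a n z \<in> {1..n}"
  using assms unfolding swp_def by (auto; presburger)

lemma swp_permutes:
  assumes "odd a" "even n" "1 \<le> a"
  shows "swp a n permutes {1..n}"
proof (rule bij_imp_permutes)
  show "bij_betw (swp a n) {1..n} {1..n}"
  proof (rule bij_betw_byWitness[where f'="swp a n"])
    show "\<forall>x\<in>{1..n}. swp a n (swp a n x) = x" using swp_invol[OF assms(1,2)] by auto
    show "\<forall>x\<in>{1..n}. swp a n (swp a n x) = x" using swp_invol[OF assms(1,2)] by auto
    show "swp a n ` {1..n} \<subseteq> {1..n}" using swp_in1[OF assms] by blast
    then show "swp a n ` {1..n} \<subseteq> {1..n}" .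
  qed
  show "\<And>x. x \<notin> {1..n} \<Longrightarrow> swp a n x = x" using assms(3) unfolding swp_def by auto
qed

lemma swp_pow:
  assumes "odd a" "even n"
  shows "swp a n ^^ m = (if even m then id else swp a n)"
proof (induction m)
  case (Suc m)
  then show ?case using swp_invol[OF assms] by (auto simp: fun_eq_iff)
qed simp

lemma even_case:
  assumes n3: "n \<ge> 3" and en: "even n"
  shows "unites_conj n (tuples 3 n) (perm_rep :: (nat \<Rightarrow> nat) \<Rightarrow> nat list \<Rightarrow> nat list \<Rightarrow> complex)"
proof -
  let ?s = "swp 1 n" and ?t = "swp 3 n" and ?X = "tuples 3 n"
  have sp: "?s permutes {1..n}" using swp_permutes[of 1 n] en by simp
  have tp: "?t permutes {1..n}" using swp_permutes[of 3 n] en by simp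
  have nc: "\<not> conj_Sn n ?s ?t"
  proof
    assume "conj_Sn n ?s ?t"
    then obtain g where gp: "g permutes {1..n}" and tg: "?t = g \<circ> ?s \<circ> inv g" unfolding conj_Sn_def by blast
    define w where "w = inv g 1"
    have w: "w \<in> {1..n}" unfolding w_def using permutes_in_image[OF permutes_inv[OF gp]] n3 by simp
    have "?t 1 = 1" unfolding swp_def by simp
    then have "g (?s w) = 1" using tg unfolding w_def by (metis comp_apply)
    moreover have "g w = 1" unfolding w_def using permutes_inverses(1)[OF gp] by simp
    ultimately have "?s w = w" using permutes_inj[OF gp] by (metis injD)
    then show False using swp_ne[of 1 w n] w by simp
  qed
  have gs: "good (map ?s) ?X" by (rule good_tuples[OF sp])
  have gt: "good (map ?t) ?X" by (rule good_tuples[OF tp])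
  have cnt: "card {x\<in>?X. (map ?s ^^ m) x = x} = card {x\<in>?X. (map ?t ^^ m) x = x}" if "m > 0" for m
  proof (cases "even m")
    case True
    then show ?thesis unfolding map_funpow using swp_pow[of 1 n m] swp_pow[of 3 n m] en by simp
  next
    case False
    have e1: "{x\<in>?X. map ?s x = x} = {}"
    proof -
      have "map ?s x \<noteq> x" if x: "x \<in> ?X" for x
      proof
        assume "map ?s x = x"
        then have fx: "\<forall>i\<in>set x. ?s i = i" using map_fix_iff by metis
        have "x \<noteq> []" using x unfolding tuples_def by auto
        then obtain i where i: "i \<in> set x" by (metis list.set_sel(1))
        then have "i \<in> {1..n}" using x unfolding tuples_def by auto
        then show False using swp_ne[of 1 i n] fx i by simp
      qed
      then show ?thesis by auto
    qed
    have e2: "{x\<in>?X. map ?t x = x} = {}"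
    proof -
      have "map ?t x \<noteq> x" if x: "x \<in> ?X" for x
      proof
        assume "map ?t x = x"
        then have fx: "\<forall>i\<in>set x. ?t i = i" using map_fix_iff by metis
        have "set x \<subseteq> {1, 2}"
        proof
          fix i assume i: "i \<in> set x"
          then have "i \<in> {1..n}" using x unfolding tuples_def by auto
          moreover have "i \<notin> {3..n}" using swp_ne[of 3 i n] fx i by auto
          ultimately show "i \<in> {1, 2}" by auto
        qed
        then have "card (set x) \<le> card {1::nat, 2}" by (intro card_mono) auto
        then have "card (set x) \<le> 2" by simp
        moreover have "card (set x) = 3" using x unfolding tuples_def by (simp add: distinct_card)
        ultimately show False by simp
      qed
      then show ?thesis by auto
    qed
    have p1: "?s ^^ m = ?s" using swp_pow[of 1 n m] en False by simp
    have p3: "?t ^^ m = ?t" using swp_pow[of 3 n m] en False by simp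
    show ?thesis unfolding map_funpow p1 p3 e1 e2 ..
  qed
  obtain h where h: "bij_betw h ?X ?X" "\<forall>x\<in>?X. h (map ?s x) = map ?t (h x)"
    using iso[OF gs gt] cnt by blast
  have hin: "h x \<in> ?X" if "x \<in> ?X" for x using h(1) that by (meson bij_betwE)
  have hinj: "inj_on h ?X" using h(1) by (simp add: bij_betw_def)
  define hi where "hi = the_inv_into ?X h"
  have hi1: "hi x \<in> ?X" "h (hi x) = x" if "x \<in> ?X" for x
    using that h(1) unfolding hi_def by (auto intro: the_inv_into_into f_the_inv_into_f_bij_betw simp: bij_betw_def)
  have hi2: "z = hi x" if "z \<in> ?X" "h z = x" for z x
    using that hinj unfolding hi_def by (auto simp: the_inv_into_f_f)
  define P where "P x y = (if h y = x then 1 else 0 :: complex)" for x y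
  define Q where "Q x y = (if h x = y then 1 else 0 :: complex)" for x y
  have fin: "finite ?X" by (rule finite_tuples)
  have PQ: "(\<Sum>z\<in>?X. P x z * Q z y) = (if x = y then 1 else 0)" if "x \<in> ?X" "y \<in> ?X" for x y
  proof -
    have "(\<Sum>z\<in>?X. P x z * Q z y) = (\<Sum>z\<in>?X. if z = hi x then (if x = y then 1 else 0) else 0)"
    proof (rule sum.cong)
      fix z assume z: "z \<in> ?X"
      show "P x z * Q z y = (if z = hi x then (if x = y then 1 else 0) else 0)"
      proof (cases "z = hi x")
        case True
        then have "h z = x" using hi1[OF that(1)] by simp
        then show ?thesis using True unfolding P_def Q_def by simp
      next
        case False
        then have "h z \<noteq> x" using hi2[OF z] by blast
        then show ?thesis using False unfolding P_def Q_def by simp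
      qed
    qed simp
    also have "\<dots> = (if x = y then 1 else 0)" using hi1[OF that(1)] fin by (simp add: sum.delta')
    finally show ?thesis .
  qed
  have QP: "(\<Sum>z\<in>?X. Q x z * P z y) = (if x = y then 1 else 0)" if "x \<in> ?X" "y \<in> ?X" for x y
  proof -
    have "(\<Sum>z\<in>?X. Q x z * P z y) = (\<Sum>z\<in>?X. if z = h x then (if h y = h x then 1 else 0) else 0)"
      by (rule sum.cong) (auto simp: P_def Q_def)
    also have "\<dots> = (if h y = h x then 1 else 0)" using hin[OF that(1)] fin by (simp add: sum.delta')
    also have "\<dots> = (if x = y then 1 else 0)" using hinj that unfolding inj_on_def by auto
    finally show ?thesis .
  qed
  have PA: "(\<Sum>z\<in>?X. P x z * perm_rep ?s z y) = (\<Sum>z\<in>?X. perm_rep ?t x z * P z y)" if "x \<in> ?X" "y \<in> ?X" for x y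
  proof -
    have sy: "map ?s y \<in> ?X" using tuples_map[OF sp that(2)] .
    have "(\<Sum>z\<in>?X. P x z * perm_rep ?s z y) = (\<Sum>z\<in>?X. if z = map ?s y then (if h (map ?s y) = x then 1 else 0) else 0)"
      by (rule sum.cong) (auto simp: P_def perm_rep_def)
    also have "\<dots> = (if h (map ?s y) = x then 1 else 0)" using sy fin by (simp add: sum.delta')
    also have "\<dots> = (if map ?t (h y) = x then 1 else 0)" using h(2) that(2) by simp
    also have "\<dots> = (\<Sum>z\<in>?X. if z = h y then (if map ?t (h y) = x then 1 else 0) else 0)"
      using hin[OF that(2)] fin by (simp add: sum.delta')
    also have "\<dots> = (\<Sum>z\<in>?X. perm_rep ?t x z * P z y)"
      by (rule sum.cong) (auto simp: P_def perm_rep_def)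
    finally show ?thesis .
  qed
  have "similar_on ?X (perm_rep ?s) (perm_rep ?t :: nat list \<Rightarrow> nat list \<Rightarrow> complex)"
    unfolding similar_on_def using PQ QP PA by blast
  then show ?thesis unfolding unites_conj_def using sp tp nc by blast
qed


theorem mainTheorem11:
  fixes n :: nat
  assumes "n \<ge> 3"
  shows "unites_conj n (tuples 3 n) (perm_rep :: (nat \<Rightarrow> nat) \<Rightarrow> nat list \<Rightarrow> nat list \<Rightarrow> complex)
         \<longleftrightarrow> even n"
proof
  assume "unites_conj n (tuples 3 n) (perm_rep :: (nat \<Rightarrow> nat) \<Rightarrow> nat list \<Rightarrow> nat list \<Rightarrow> complex)"
  then obtain s t where s: "s permutes {1..n}" and t: "t permutes {1..n}" and nc: "\<not> conj_Sn n s t"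
    and sim: "similar_on (tuples 3 n) (perm_rep s) (perm_rep t :: nat list \<Rightarrow> nat list \<Rightarrow> complex)"
    unfolding unites_conj_def by blast
  show "even n"
  proof (rule ccontr)
    assume "odd n"
    then have "conj_Sn n s t" using odd_case[OF assms _ s t sim] by blast
    then show False using nc by simp
  qed
next
  assume "even n"
  then show "unites_conj n (tuples 3 n) (perm_rep :: (nat \<Rightarrow> nat) \<Rightarrow> nat list \<Rightarrow> nat list \<Rightarrow> complex)"
    using even_case[OF assms] by blast
qed

end
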